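(* Let $\beta=0$ and $\alpha=n/m$ with $n,m$ positive integers, $\gcd(n,m)=1$. For $p_0\in[0,1)$ let $\Lambda(\alpha,p_0)=\bigcup_{k=0}^{m-1}\{(q,(p_0+k\alpha)\bmod 1): q\in[0,1)\}$, a union of $m$ distinct horizontal circles. Then: (i) $\phi(\Lambda(\alpha,p_0))=\Lambda(\alpha,p_0)$ and $\phi$ restricted to $\Lambda(\alpha,p_0)$ is an interval exchange transformation, i.e. a bijection of $\Lambda(\alpha,p_0)$ for which there is a partition of $\Lambda(\alpha,p_0)$ into finitely many half-open horizontal segments such that on each segment $\phi(q,p)=(q+a,p+b)\pmod 1$ for constants $(a,b)$ depending on the segment; (ii) if $p_0\in\mathbb{Q}$ then there exists an integer $k=k(\alpha,p_0)\ge1$ such that $\phi^k$ restricted to $\Lambda(\alpha,p_0)$ is the identity; (iii) if $p_0\notin\mathbb{Q}$ then $\phi$ restricted to $\Lambda(\alpha,p_0)$ has no periodic points.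
   Context: $\mathbb{T}^2=[0,1)^2$ with addition modulo 1. Define $\theta(q)=1$ for $q\in[0,\tfrac12)$ and $\theta(q)=-1$ for $q\in[\tfrac12,1)$. The triangle map with parameters $(\alpha,\beta)$ is $\phi(q,p)=(q+p+\alpha\theta(q)+\beta,\ p+\alpha\theta(q)+\beta)\pmod 1$; here $\beta=0$, so $\phi(q,p)=(q+p+\alpha\theta(q),\ p+\alpha\theta(q))\pmod 1$. *)

theory Defs
  imports Complex_Main
begin

text \<open>Points of the torus [0,1)^2 are represented as pairs of reals; reduction mod 1 is frac.\<close>

definition theta :: "real \<Rightarrow> real" where
  "theta q = (if q < 1/2 then 1 else -1)"

definition tri_map :: "real \<Rightarrow> real \<times> real \<Rightarrow> real \<times> real" where
  "tri_map \<alpha> x = (case x of (q, p) \<Rightarrow>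
     (frac (q + p + \<alpha> * theta q), frac (p + \<alpha> * theta q)))"

definition Lambda :: "nat \<Rightarrow> nat \<Rightarrow> real \<Rightarrow> (real \<times> real) set" where
  "Lambda n m p0 = {(q, frac (p0 + real k * (real n / real m))) | q k. 0 \<le> q \<and> q < 1 \<and> k < m}"

definition hseg :: "real \<Rightarrow> real \<Rightarrow> real \<Rightarrow> (real \<times> real) set" where
  "hseg a b c = {(q, c) | q. a \<le> q \<and> q < b}"

definition is_IET :: "(real \<times> real \<Rightarrow> real \<times> real) \<Rightarrow> (real \<times> real) set \<Rightarrow> bool" where
  "is_IET f S \<longleftrightarrow> bij_betw f S S \<and>
     (\<exists>P. finite P \<and> \<Union>P = S \<and> (\<forall>A\<in>P. \<forall>B\<in>P. A \<noteq> B \<longrightarrow> A \<inter> B = {}) \<and>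
        (\<forall>A\<in>P. \<exists>a b c s t. 0 \<le> a \<and> a < b \<and> b \<le> 1 \<and> A = hseg a b c \<and>
             (\<forall>q p. (q, p) \<in> A \<longrightarrow> f (q, p) = (frac (q + s), frac (p + t)))))"

end

theory Submission
  imports Defs
begin


lemma theta_cases: "theta q = 1 \<or> theta q = -1"
  by (simp add: theta_def)

lemma tri_alt: "tri_map al (q,p) = (frac (q + frac (p + al * theta q)), frac (p + al * theta q))"
  by (simp add: tri_map_def add.assoc)

definition inv_tri :: "real \<Rightarrow> real \<times> real \<Rightarrow> real \<times> real" where
  "inv_tri al y = (case y of (q', p') \<Rightarrow>
     (frac (q' - p'), frac (p' - al * theta (frac (q' - p')))))"

lemma frac_fd: "frac (frac a - b) = frac (a - b)"
  by (metis diff_conv_add_uminus frac_add_simps(1))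

lemma inv1: assumes "0 \<le> q" "q < 1" "0 \<le> p" "p < 1"
  shows "inv_tri al (tri_map al (q,p)) = (q,p)"
proof -
  have a: "frac (frac (q + frac (p + al * theta q)) - frac (p + al * theta q)) = q"
    using assms by (simp only: frac_fd frac_add_simps frac_diff_simp, simp add: frac_eq)
  have b: "frac (frac (p + al * theta q) - al * theta q) = p"
    using assms by (simp only: frac_fd, simp add: frac_eq)
  show ?thesis unfolding tri_alt inv_tri_def using a b by simp
qed

lemma inv2: assumes "0 \<le> q" "q < 1" "0 \<le> p" "p < 1"
  shows "tri_map al (inv_tri al (q,p)) = (q,p)"
proof -
  define r where "r = frac (q - p)"
  have a: "frac (frac (p - al * theta r) + al * theta r) = p"
    using assms by (simp add: frac_eq)
  have b: "frac (r + p) = q" unfolding r_def using assms by (simp add: frac_eq)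
  have "tri_map al (inv_tri al (q,p)) = tri_map al (r, frac (p - al*theta r))"
    by (simp add: inv_tri_def r_def)
  then show ?thesis unfolding tri_alt using a b by simp
qed

lemma hgt_shift:
  fixes n m :: nat and p0 :: real
  assumes "m > 0" "k < m" "e = 1 \<or> e = -1"
  shows "\<exists>k'<m. frac (frac (p0 + real k * (real n / real m)) + (real n / real m) * e)
               = frac (p0 + real k' * (real n / real m))"
  using assms(3)
proof
  assume e: "e = 1"
  show ?thesis
  proof (cases "k + 1 < m")
    case True
    have "p0 + real k * (real n / real m) + (real n / real m) * e
       = p0 + real (k+1) * (real n / real m)"
      using e assms(1) by (simp add: field_simps)
    then have "frac (frac (p0 + real k * (real n / real m)) + (real n / real m) * e)
       = frac (p0 + real (k+1) * (real n / real m))" by (simp only: frac_add_simps)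
    then show ?thesis using True by blast
  next
    case False
    hence km: "k + 1 = m" using assms by simp
    have rm: "real m = real k + 1" using km by linarith
    have "real k * (real n / real m) + real n / real m = (real k + 1) * (real n / real m)"
      by (simp add: distrib_right add_divide_distrib)
    also have "\<dots> = real m * (real n / real m)" by (simp only: rm)
    also have "\<dots> = real n" using assms(1) by simp
    finally have h: "real k * (real n / real m) + real n / real m = real n" .
    have "p0 + real k * (real n / real m) + (real n / real m) * e = p0 + real 0 * (real n / real m) + of_int (int n)"
      using h e by simp
    then have "frac (frac (p0 + real k * (real n / real m)) + (real n / real m) * e)
       = frac (p0 + real 0 * (real n / real m))" by (simp only: frac_add_simps frac_add_of_int_right)
    then show ?thesis using assms(1) by blast
  qed
next
  assume e: "e = -1"
  show ?thesis
  proof (cases "k > 0")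
    case True
    have "p0 + real k * (real n / real m) + (real n / real m) * e
       = p0 + real (k-1) * (real n / real m)"
      using e True by (simp add: of_nat_diff left_diff_distrib diff_divide_distrib)
    then have "frac (frac (p0 + real k * (real n / real m)) + (real n / real m) * e)
       = frac (p0 + real (k-1) * (real n / real m))" by (simp only: frac_add_simps)
    then show ?thesis using assms(2) by (intro exI[of _ "k-1"]) simp
  next
    case False
    hence k0: "k = 0" by simp
    have h2: "real (m-1) * (real n / real m) = real n - real n / real m"
      using assms(1) by (simp add: of_nat_diff left_diff_distrib diff_divide_distrib)
    have "p0 + real k * (real n / real m) + (real n / real m) * e
          = p0 + real (m - 1) * (real n / real m) + of_int (- int n)"
      using k0 e h2 by simp
    then have "frac (frac (p0 + real k * (real n / real m)) + (real n / real m) * e)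
       = frac (p0 + real (m-1) * (real n / real m))" by (simp only: frac_add_simps frac_add_of_int_right)
    then show ?thesis using assms(1) by (intro exI[of _ "m-1"]) simp
  qed
qed

lemma Lam_mem: "(q,p) \<in> Lambda n m p0 \<longleftrightarrow> 0 \<le> q \<and> q < 1 \<and> (\<exists>k<m. p = frac (p0 + real k * (real n / real m)))"
  by (auto simp: Lambda_def)

lemma Lam_sub: "x \<in> Lambda n m p0 \<Longrightarrow> 0 \<le> fst x \<and> fst x < 1 \<and> 0 \<le> snd x \<and> snd x < 1"
  by (auto simp: Lambda_def frac_lt_1)

lemma tri_into:
  assumes "m > 0" "x \<in> Lambda n m p0"
  shows "tri_map (real n / real m) x \<in> Lambda n m p0"
proof -
  obtain q k where x: "x = (q, frac (p0 + real k * (real n / real m)))" "0 \<le> q" "q < 1" "k < m"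
    using assms(2) by (auto simp: Lambda_def)
  obtain k' where k': "k' < m" "frac (frac (p0 + real k * (real n / real m)) + (real n / real m) * theta q)
               = frac (p0 + real k' * (real n / real m))"
    using hgt_shift[OF assms(1) x(4) theta_cases[of q]] by blast
  show ?thesis unfolding x(1) tri_alt Lam_mem using k' by (auto simp: frac_lt_1)
qed

lemma inv_into:
  assumes "m > 0" "x \<in> Lambda n m p0"
  shows "inv_tri (real n / real m) x \<in> Lambda n m p0"
proof -
  obtain q k where x: "x = (q, frac (p0 + real k * (real n / real m)))" "0 \<le> q" "q < 1" "k < m"
    using assms(2) by (auto simp: Lambda_def)
  define r where "r = frac (q - frac (p0 + real k * (real n / real m)))"
  have e: "- theta r = 1 \<or> - theta r = -1" using theta_cases[of r] by auto
  obtain k' where k': "k' < m" "frac (frac (p0 + real k * (real n / real m)) + (real n / real m) * (- theta r))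
               = frac (p0 + real k' * (real n / real m))"
    using hgt_shift[OF assms(1) x(4) e] by blast
  have "inv_tri (real n / real m) x = (r, frac (frac (p0 + real k * (real n / real m)) + (real n / real m) * (- theta r)))"
    unfolding x(1) inv_tri_def r_def by simp
  then show ?thesis using k' by (auto simp: Lam_mem r_def frac_lt_1)
qed

lemma tri_bij:
  assumes "m > 0"
  shows "bij_betw (tri_map (real n / real m)) (Lambda n m p0) (Lambda n m p0)"
proof (rule bij_betw_byWitness[where f'="inv_tri (real n / real m)"])
  show "\<forall>a\<in>Lambda n m p0. inv_tri (real n / real m) (tri_map (real n / real m) a) = a"
    using Lam_sub inv1 by (metis prod.collapse)
  show "\<forall>a\<in>Lambda n m p0. tri_map (real n / real m) (inv_tri (real n / real m) a) = a"
    using Lam_sub inv2 by (metis prod.collapse)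
  show "tri_map (real n / real m) ` Lambda n m p0 \<subseteq> Lambda n m p0"
    using tri_into[OF assms] by blast
  show "inv_tri (real n / real m) ` Lambda n m p0 \<subseteq> Lambda n m p0"
    using inv_into[OF assms] by blast
qed

lemma tri_IET:
  assumes "m > 0"
  shows "is_IET (tri_map (real n / real m)) (Lambda n m p0)"
  unfolding is_IET_def
proof (intro conjI tri_bij[OF assms])
  define H where "H = (\<lambda>k. frac (p0 + real k * (real n / real m))) ` {..<m}"
  define P where "P = (\<lambda>h. hseg 0 (1/2) h) ` H \<union> (\<lambda>h. hseg (1/2) 1 h) ` H"
  have "finite P" unfolding P_def H_def by simp
  moreover have "\<Union>P = Lambda n m p0"
  proof
    show "\<Union>P \<subseteq> Lambda n m p0" unfolding P_def H_def by (auto simp: hseg_def Lambda_def)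
    show "Lambda n m p0 \<subseteq> \<Union>P"
    proof
      fix x assume "x \<in> Lambda n m p0"
      then obtain q k where x: "x = (q, frac (p0 + real k * (real n / real m)))" "0 \<le> q" "q < 1" "k < m"
        by (auto simp: Lambda_def)
      have hH: "frac (p0 + real k * (real n / real m)) \<in> H" unfolding H_def using x(4) by blast
      show "x \<in> \<Union>P"
      proof (cases "q < 1/2")
        case True
        then have "x \<in> hseg 0 (1/2) (frac (p0 + real k * (real n / real m)))"
          using x by (auto simp: hseg_def)
        then show ?thesis unfolding P_def using hH by blast
      next
        case False
        then have "x \<in> hseg (1/2) 1 (frac (p0 + real k * (real n / real m)))"
          using x by (auto simp: hseg_def)
        then show ?thesis unfolding P_def using hH by blast
      qed
    qed
  qed
  moreover have "\<forall>A\<in>P. \<forall>B\<in>P. A \<noteq> B \<longrightarrow> A \<inter> B = {}"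
    unfolding P_def by (auto simp: hseg_def)
  moreover have "\<forall>A\<in>P. \<exists>a b c s t. 0 \<le> a \<and> a < b \<and> b \<le> 1 \<and> A = hseg a b c \<and>
             (\<forall>q p. (q, p) \<in> A \<longrightarrow> tri_map (real n / real m) (q, p) = (frac (q + s), frac (p + t)))"
  proof
    fix A assume "A \<in> P"
    then obtain h where "A = hseg 0 (1/2) h \<or> A = hseg (1/2) 1 h" unfolding P_def by blast
    then show "\<exists>a b c s t. 0 \<le> a \<and> a < b \<and> b \<le> 1 \<and> A = hseg a b c \<and>
             (\<forall>q p. (q, p) \<in> A \<longrightarrow> tri_map (real n / real m) (q, p) = (frac (q + s), frac (p + t)))"
    proof
      assume A: "A = hseg 0 (1/2) h"
      show ?thesis
        by (rule exI[of _ 0], rule exI[of _ "1/2"], rule exI[of _ h], rule exI[of _ "h + real n / real m"],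
            rule exI[of _ "real n / real m"]) (auto simp: A hseg_def tri_map_def theta_def add.assoc)
    next
      assume A: "A = hseg (1/2) 1 h"
      show ?thesis
        by (rule exI[of _ "1/2"], rule exI[of _ 1], rule exI[of _ h], rule exI[of _ "h - real n / real m"],
            rule exI[of _ "- (real n / real m)"]) (auto simp: A hseg_def tri_map_def theta_def add.assoc)
    qed
  qed
  ultimately show "\<exists>P. finite P \<and> \<Union>P = Lambda n m p0 \<and> (\<forall>A\<in>P. \<forall>B\<in>P. A \<noteq> B \<longrightarrow> A \<inter> B = {}) \<and>
        (\<forall>A\<in>P. \<exists>a b c s t. 0 \<le> a \<and> a < b \<and> b \<le> 1 \<and> A = hseg a b c \<and>
             (\<forall>q p. (q, p) \<in> A \<longrightarrow> tri_map (real n / real m) (q, p) = (frac (q + s), frac (p + t))))"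
    by blast
qed

lemma orbit_inv:
  assumes "m > 0" "(q,p) \<in> Lambda n m p0"
  shows "\<exists>j l::int. snd ((tri_map (real n / real m) ^^ i) (q,p)) = p0 + of_int j / real m
           \<and> fst ((tri_map (real n / real m) ^^ i) (q,p)) = q + real i * p0 + of_int l / real m"
proof (induction i)
  case 0
  obtain k where k: "p = frac (p0 + real k * (real n / real m))" using assms(2) by (auto simp: Lam_mem)
  define F where "F = \<lfloor>p0 + real k * (real n / real m)\<rfloor>"
  have "p = p0 + of_int (int k * int n - int m * F) / real m"
    using assms(1) unfolding k frac_def F_def[symmetric] by (simp add: field_simps)
  then show ?case by (intro exI[of _ "int k * int n - int m * F"] exI[of _ 0]) simp
next
  case (Suc i)
  then obtain j l :: int where jl: "snd ((tri_map (real n / real m) ^^ i) (q,p)) = p0 + of_int j / real m"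
    "fst ((tri_map (real n / real m) ^^ i) (q,p)) = q + real i * p0 + of_int l / real m" by blast
  define y where "y = (tri_map (real n / real m) ^^ i) (q,p)"
  obtain q' p' where y: "y = (q', p')" by fastforce
  have q': "q' = q + real i * p0 + of_int l / real m" and p': "p' = p0 + of_int j / real m"
    using jl unfolding y_def[symmetric] y by auto
  obtain e :: int where e: "theta q' = of_int e" using theta_cases[of q'] by (metis of_int_1 of_int_minus)
  define F where "F = \<lfloor>p' + real n / real m * theta q'\<rfloor>"
  define G where "G = \<lfloor>q' + p' + real n / real m * theta q'\<rfloor>"
  have "(tri_map (real n / real m) ^^ Suc i) (q,p) = tri_map (real n / real m) (q', p')"
    using y y_def by simp
  also have "\<dots> = (q' + p' + real n / real m * theta q' - of_int G, p' + real n / real m * theta q' - of_int F)"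
    unfolding tri_map_def F_def G_def frac_def by simp
  also have "\<dots> = (q + real (Suc i) * p0 + of_int (l + j + int n * e - int m * G) / real m,
                     p0 + of_int (j + int n * e - int m * F) / real m)"
    using assms(1) unfolding e unfolding q' p' by (simp add: field_simps)
  finally show ?case
    by (intro exI[of _ "j + int n * e - int m * F"] exI[of _ "l + j + int n * e - int m * G"]) simp
qed

lemma funpow_into:
  assumes "m > 0" "x \<in> Lambda n m p0"
  shows "(tri_map (real n / real m) ^^ i) x \<in> Lambda n m p0"
  by (induction i) (auto intro: tri_into[OF assms(1)] simp: assms(2))

lemma no_periodic:
  assumes "m > 0" "x \<in> Lambda n m p0" "k \<ge> 1" "(tri_map (real n / real m) ^^ k) x = x"
  shows "p0 \<in> \<rat>"
proof -
  obtain q p where x: "x = (q,p)" by fastforce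
  obtain j l :: int where "fst ((tri_map (real n / real m) ^^ k) (q,p)) = q + real k * p0 + of_int l / real m"
    using orbit_inv[OF assms(1) assms(2)[unfolded x]] by blast
  then have "q = q + real k * p0 + of_int l / real m" using assms(4) x by simp
  then have "p0 = - of_int l / (real m * real k)" using assms(1,3) by (simp add: field_simps)
  then show ?thesis by simp
qed

lemma funpow_in: "f ` S \<subseteq> S \<Longrightarrow> x \<in> S \<Longrightarrow> (f ^^ i) x \<in> S"
  by (induction i) auto

lemma inj_funpow: "inj_on f S \<Longrightarrow> f ` S \<subseteq> S \<Longrightarrow> inj_on (f ^^ i) S"
proof (induction i)
  case 0 then show ?case by simp
next
  case (Suc i)
  have "inj_on (f \<circ> (f ^^ i)) S"
    using Suc by (intro comp_inj_on) (auto intro: inj_on_subset[of f S] funpow_in)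
  then show ?case by (simp add: funpow_Suc_right[symmetric] comp_def funpow_swap1)
qed

lemma funpow_period_mult: "(f ^^ d) x = x \<Longrightarrow> (f ^^ (d * c)) x = x"
proof -
  assume h: "(f ^^ d) x = x"
  have "((f ^^ d) ^^ c) x = x" by (induction c) (simp_all add: h)
  then show ?thesis by (simp add: funpow_mult)
qed

lemma fin_orbit_period:
  assumes inj: "inj_on f S" and into: "f ` S \<subseteq> S" and x: "x \<in> S"
    and fin: "finite G" and cardG: "card G \<le> N" and orb: "\<forall>i. (f ^^ i) x \<in> G"
  shows "(f ^^ (fact N)) x = x"
proof -
  have "\<not> inj_on (\<lambda>i. (f ^^ i) x) {0..N}"
  proof
    assume "inj_on (\<lambda>i. (f ^^ i) x) {0..N}"
    then have "card {0..N} \<le> card G" using orb fin by (intro card_inj_on_le) auto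
    then show False using cardG by simp
  qed
  then obtain i j where ij: "i \<in> {0..N}" "j \<in> {0..N}" "i \<noteq> j" "(f ^^ i) x = (f ^^ j) x"
    unfolding inj_on_def by blast
  have "\<exists>i j. i < j \<and> j \<le> N \<and> (f ^^ i) x = (f ^^ j) x"
  proof (cases "i < j")
    case True then show ?thesis using ij by auto
  next
    case False then have "j < i" using ij(3) by simp
    then show ?thesis using ij by (intro exI[of _ j] exI[of _ i]) auto
  qed
  then obtain i j where ij: "i < j" "j \<le> N" "(f ^^ i) x = (f ^^ j) x" by blast
  define d where "d = j - i"
  have "(f ^^ j) x = (f ^^ i) ((f ^^ d) x)"
  proof -
    have "j = i + d" using ij(1) by (simp add: d_def)
    then show ?thesis by (simp add: funpow_add)
  qed
  then have "(f ^^ i) ((f ^^ d) x) = (f ^^ i) x" using ij(3) by simp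
  then have dx: "(f ^^ d) x = x"
    using inj_funpow[OF inj into, of i] funpow_in[OF into x] x unfolding inj_on_def by blast
  have "d dvd fact N" using ij unfolding d_def by (intro dvd_fact) auto
  then obtain c where "fact N = d * c" by (auto elim: dvdE)
  then show ?thesis using funpow_period_mult[OF dx] by simp
qed

lemma rat_periodic:
  assumes "m > 0" "p0 \<in> \<rat>"
  shows "\<exists>k::nat. k \<ge> 1 \<and> (\<forall>x\<in>Lambda n m p0. (tri_map (real n / real m) ^^ k) x = x)"
proof -
  obtain a b :: int where ab: "b > 0" "p0 = of_int a / of_int b" using Rats_cases'[OF assms(2)] by blast
  define D where "D = b * int m"
  have D: "D > 0" using ab(1) assms(1) by (simp add: D_def)
  have Dr: "real_of_int D = of_int b * real m" by (simp add: D_def)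
  define N where "N = nat (2*D+1) * nat (D+1)"
  let ?f = "tri_map (real n / real m)"
  have "(?f ^^ fact N) x = x" if x: "x \<in> Lambda n m p0" for x
  proof -
    obtain q p where qp: "x = (q,p)" by fastforce
    have q: "0 \<le> q" "q < 1" using Lam_sub[OF x] qp by auto
    define G :: "(real \<times> real) set" where "G = (\<lambda>(r,s). (q + of_int r / of_int D, of_int s / of_int D)) ` ({-D..D} \<times> {0..D})"
    have finG: "finite G" unfolding G_def by simp
    have "card G \<le> card ({-D..D} \<times> {0..D})" unfolding G_def by (rule card_image_le) simp
    also have "\<dots> = N" unfolding N_def by (simp add: card_cartesian_product)
    finally have cardG: "card G \<le> N" .
    have orb: "\<forall>i. (?f ^^ i) x \<in> G"
    proof
      fix i
      obtain j l :: int where jl: "snd ((?f ^^ i) (q,p)) = p0 + of_int j / real m"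
           "fst ((?f ^^ i) (q,p)) = q + real i * p0 + of_int l / real m"
        using orbit_inv[OF assms(1) x[unfolded qp]] by blast
      have inL: "(?f ^^ i) (q,p) \<in> Lambda n m p0" using funpow_into[OF assms(1) x] qp by simp
      define s where "s = a * int m + j * b"
      define r where "r = int i * a * int m + l * b"
      have sD: "snd ((?f ^^ i) (q,p)) = of_int s / of_int D"
        unfolding jl ab(2) s_def Dr using ab(1) assms(1) by (simp add: field_simps)
      have rD: "fst ((?f ^^ i) (q,p)) = q + of_int r / of_int D"
        unfolding jl ab(2) r_def Dr using ab(1) assms(1) by (simp add: field_simps)
      have b1: "0 \<le> of_int s / (of_int D::real)" "of_int s / (of_int D::real) < 1"
        using Lam_sub[OF inL] sD by auto
      have b2: "0 \<le> q + of_int r / (of_int D::real)" "q + of_int r / (of_int D::real) < 1"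
        using Lam_sub[OF inL] rD by auto
      have "(of_int s::real) < of_int D" using b1(2) D by (simp add: divide_less_eq)
      moreover have "(0::real) \<le> of_int s" using b1(1) D by (simp add: zero_le_divide_iff)
      moreover have "of_int r / (of_int D::real) < 1" "-1 < of_int r / (of_int D::real)" using b2 q by linarith+
      then have "(of_int r::real) < of_int D" "- of_int D < (of_int r::real)" using D
        by (simp_all add: divide_less_eq less_divide_eq)
      ultimately have bnds: "s \<in> {0..D}" "r \<in> {-D..D}" by auto
      have "(?f ^^ i) (q,p) = (q + of_int r / of_int D, of_int s / of_int D)"
        using sD rD by (metis prod.collapse)
      then show "(?f ^^ i) x \<in> G" unfolding G_def qp using bnds by force
    qed
    show ?thesis
      using fin_orbit_period[OF bij_betw_imp_inj_on[OF tri_bij[OF assms(1)]] _ x finG cardG orb]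
        tri_into[OF assms(1)] by blast
  qed
  then show ?thesis by (intro exI[of _ "fact N"]) auto
qed


theorem lemma2:
  fixes n m :: nat and p0 :: real
  assumes "n > 0" and "m > 0" and "coprime n m"
    and "0 \<le> p0" and "p0 < 1"
  shows "tri_map (real n / real m) ` Lambda n m p0 = Lambda n m p0
     \<and> is_IET (tri_map (real n / real m)) (Lambda n m p0)
     \<and> (p0 \<in> \<rat> \<longrightarrow> (\<exists>k::nat. k \<ge> 1 \<and>
          (\<forall>x\<in>Lambda n m p0. (tri_map (real n / real m) ^^ k) x = x)))
     \<and> (p0 \<notin> \<rat> \<longrightarrow> \<not> (\<exists>x\<in>Lambda n m p0. \<exists>k::nat. k \<ge> 1 \<and>
          (tri_map (real n / real m) ^^ k) x = x))"
  using bij_betw_imp_surj_on[OF tri_bij[OF assms(2)]] tri_IET[OF assms(2)]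
    rat_periodic[OF assms(2)] no_periodic[OF assms(2)] by blast

end
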